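(* For all $x\in R(E)$, $u\in R(F,H)$ and $v\in W(F,H)$, \[ x\bullet(uv)=(x\bullet u)v . \]
   Context: Let $f\in\mathbb{C}[H]$ be a polynomial. $R=R(f)$ is the associative $\mathbb{C}$-algebra generated by $E,F,H$ with relations $EF-FE=f(H)$, $HE-EH=E$, $HF-FH=-F$; the monomials $F^iH^jE^k$ form a basis of $R$. $Z(R)$ is the center of $R$. Let $R(E)=\mathbb{C}[E]$ and $R(F,H)$ the subalgebra generated by $F,H$. Fix an algebra homomorphism $\eta:R(E)\to\mathbb{C}$ with $\eta(E)\neq0$ and let $R_\eta(E)=\ker\eta$. Then $R=R(F,H)\oplus R\,R_\eta(E)$ as vector spaces; for $u\in R$, $u^\eta$ denotes its $R(F,H)$-component. $W(F,H)=\{z^\eta: z\in Z(R)\}$. The $\eta$-reduced action of $R(E)$ on $R(F,H)$ is $x\bullet v=(xv)^\eta-\eta(x)v$ for $x\in R(E)$, $v\in R(F,H)$. *)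

theory Defs
  imports "HOL-Computational_Algebra.Polynomial"
begin

text \<open>The algebra R(f) is modelled by an arbitrary ring 'a together with a central
ring embedding sc of the complex scalars and elements E, F, H satisfying the defining
relations and such that the monomials F^i H^j E^k form a C-basis.  Any such algebra
is isomorphic to R(f).\<close>

definition lin_span :: "(complex \<Rightarrow> 'a::ring_1) \<Rightarrow> 'a set \<Rightarrow> 'a set" where
  "lin_span sc S = {\<Sum>i<n. sc (c i) * b i | (n::nat) c b. \<forall>i<n. b i \<in> S}"

definition poly_eval :: "(complex \<Rightarrow> 'a::ring_1) \<Rightarrow> complex poly \<Rightarrow> 'a \<Rightarrow> 'a" where
  "poly_eval sc p x = (\<Sum>i\<le>degree p. sc (coeff p i) * x ^ i)"

definition monoFHE :: "'a::ring_1 \<Rightarrow> 'a \<Rightarrow> 'a \<Rightarrow> nat \<times> nat \<times> nat \<Rightarrow> 'a" where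
  "monoFHE E F H t = (case t of (i, j, k) \<Rightarrow> F ^ i * H ^ j * E ^ k)"

definition is_Rf :: "(complex \<Rightarrow> 'a::ring_1) \<Rightarrow> complex poly \<Rightarrow> 'a \<Rightarrow> 'a \<Rightarrow> 'a \<Rightarrow> bool" where
  "is_Rf sc f E F H \<longleftrightarrow>
     sc 1 = 1 \<and> (\<forall>a b. sc (a + b) = sc a + sc b) \<and> (\<forall>a b. sc (a * b) = sc a * sc b) \<and>
     (\<forall>a x. sc a * x = x * sc a) \<and>
     E * F - F * E = poly_eval sc f H \<and> H * E - E * H = E \<and> H * F - F * H = - F \<and>
     (\<forall>(n::nat) c t. inj_on t {..<n} \<longrightarrow> (\<Sum>i<n. sc (c i) * monoFHE E F H (t i)) = 0
         \<longrightarrow> (\<forall>i<n. c i = 0)) \<and>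
     (\<forall>u. u \<in> lin_span sc (range (monoFHE E F H)))"

inductive_set gen_subalg :: "(complex \<Rightarrow> 'a::ring_1) \<Rightarrow> 'a set \<Rightarrow> 'a set"
  for sc :: "complex \<Rightarrow> 'a" and S :: "'a set" where
  gen_scalar: "sc c \<in> gen_subalg sc S"
| gen_base: "x \<in> S \<Longrightarrow> x \<in> gen_subalg sc S"
| gen_add: "x \<in> gen_subalg sc S \<Longrightarrow> y \<in> gen_subalg sc S \<Longrightarrow> x + y \<in> gen_subalg sc S"
| gen_mult: "x \<in> gen_subalg sc S \<Longrightarrow> y \<in> gen_subalg sc S \<Longrightarrow> x * y \<in> gen_subalg sc S"

definition center :: "'a::ring_1 set" where
  "center = {z. \<forall>y. z * y = y * z}"

definition RE :: "(complex \<Rightarrow> 'a::ring_1) \<Rightarrow> 'a \<Rightarrow> 'a set" where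
  "RE sc E = {poly_eval sc p E | p. True}"

definition RFH :: "(complex \<Rightarrow> 'a::ring_1) \<Rightarrow> 'a \<Rightarrow> 'a \<Rightarrow> 'a set" where
  "RFH sc F H = gen_subalg sc {F, H}"

definition is_eta :: "(complex \<Rightarrow> 'a::ring_1) \<Rightarrow> 'a \<Rightarrow> ('a \<Rightarrow> complex) \<Rightarrow> bool" where
  "is_eta sc E \<eta> \<longleftrightarrow>
     (\<forall>c. \<eta> (sc c) = c) \<and>
     (\<forall>x\<in>RE sc E. \<forall>y\<in>RE sc E. \<eta> (x + y) = \<eta> x + \<eta> y \<and> \<eta> (x * y) = \<eta> x * \<eta> y)"

definition RetaE :: "(complex \<Rightarrow> 'a::ring_1) \<Rightarrow> 'a \<Rightarrow> ('a \<Rightarrow> complex) \<Rightarrow> 'a set" where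
  "RetaE sc E \<eta> = {x \<in> RE sc E. \<eta> x = 0}"

definition R_RetaE :: "(complex \<Rightarrow> 'a::ring_1) \<Rightarrow> 'a \<Rightarrow> ('a \<Rightarrow> complex) \<Rightarrow> 'a set" where
  "R_RetaE sc E \<eta> = {\<Sum>i<n. r i * y i | (n::nat) r y. \<forall>i<n. y i \<in> RetaE sc E \<eta>}"

text \<open>u^eta: the R(F,H)-component of u in R = R(F,H) \<oplus> R R_eta(E).\<close>
definition eta_part :: "(complex \<Rightarrow> 'a::ring_1) \<Rightarrow> 'a \<Rightarrow> 'a \<Rightarrow> 'a \<Rightarrow> ('a \<Rightarrow> complex) \<Rightarrow> 'a \<Rightarrow> 'a" where
  "eta_part sc E F H \<eta> u = (THE v. v \<in> RFH sc F H \<and> u - v \<in> R_RetaE sc E \<eta>)"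

definition W_FH :: "(complex \<Rightarrow> 'a::ring_1) \<Rightarrow> 'a \<Rightarrow> 'a \<Rightarrow> 'a \<Rightarrow> ('a \<Rightarrow> complex) \<Rightarrow> 'a set" where
  "W_FH sc E F H \<eta> = {eta_part sc E F H \<eta> z | z. z \<in> center}"

definition eta_act :: "(complex \<Rightarrow> 'a::ring_1) \<Rightarrow> 'a \<Rightarrow> 'a \<Rightarrow> 'a \<Rightarrow> ('a \<Rightarrow> complex) \<Rightarrow> 'a \<Rightarrow> 'a \<Rightarrow> 'a" where
  "eta_act sc E F H \<eta> x v = eta_part sc E F H \<eta> (x * v) - sc (\<eta> x) * v"

end

theory Submission
  imports Defs
begin


locale rf =
  fixes sc :: "complex \<Rightarrow> 'a::ring_1" and f :: "complex poly" and E F H :: 'a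
    and \<eta> :: "'a \<Rightarrow> complex"
  assumes Rf: "is_Rf sc f E F H" and eta: "is_eta sc E \<eta>"
begin

lemma Rf_conj:
  "sc 1 = 1 \<and> (\<forall>a b. sc (a + b) = sc a + sc b) \<and> (\<forall>a b. sc (a * b) = sc a * sc b) \<and>
     (\<forall>a x. sc a * x = x * sc a) \<and>
     E * F - F * E = poly_eval sc f H \<and> H * E - E * H = E \<and> H * F - F * H = - F \<and>
     (\<forall>(n::nat) c t. inj_on t {..<n} \<longrightarrow> (\<Sum>i<n. sc (c i) * monoFHE E F H (t i)) = 0
         \<longrightarrow> (\<forall>i<n. c i = 0)) \<and>
     (\<forall>u. u \<in> lin_span sc (range (monoFHE E F H)))"
  using Rf unfolding is_Rf_def .

lemma sc1: "sc 1 = 1" using Rf_conj by (elim conjE)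
lemma sc_add: "sc (a + b) = sc a + sc b" using Rf_conj by (elim conjE allE)
lemma sc_mult: "sc (a * b) = sc a * sc b" using Rf_conj by (elim conjE allE)
lemma sc_comm: "sc a * x = x * sc a" using Rf_conj by (elim conjE allE)
lemma relHF: "H * F - F * H = - F" using Rf_conj by (elim conjE)
lemma spanall: "u \<in> lin_span sc (range (monoFHE E F H))" using Rf_conj by (elim conjE allE)
lemma indep: "inj_on t {..<(n::nat)} \<Longrightarrow> (\<Sum>i<n. sc (c i) * monoFHE E F H (t i)) = 0 \<Longrightarrow> i < n \<Longrightarrow> c i = 0"
proof -
  assume a: "inj_on t {..<n}" "(\<Sum>i<n. sc (c i) * monoFHE E F H (t i)) = 0" "i < n"
  have "\<forall>(n::nat) c t. inj_on t {..<n} \<longrightarrow> (\<Sum>i<n. sc (c i) * monoFHE E F H (t i)) = 0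
         \<longrightarrow> (\<forall>i<n. c i = 0)" using Rf_conj by (elim conjE)
  from this[rule_format, OF a(1) a(2) a(3)] show "c i = 0" .
qed

lemma sc0: "sc 0 = 0"
  using sc_add[of 0 0] by simp

lemma sc_neg: "sc (- a) = - sc a"
  using sc_add[of a "-a"] sc0 by (metis add.inverse_unique add.right_inverse)

lemma sc_diff: "sc (a - b) = sc a - sc b"
  using sc_add[of a "-b"] sc_neg by simp

lemma sc_of_nat: "sc (of_nat n) = of_nat n"
proof (induction n)
  case 0 then show ?case by (simp only: of_nat_0 sc0)
next
  case (Suc n) then show ?case using sc_add[of 1 "of_nat n"] by (simp only: of_nat_Suc sc1)
qed

abbreviation b where "b \<equiv> monoFHE E F H"

definition supp :: "(nat \<times> nat \<times> nat \<Rightarrow> complex) \<Rightarrow> (nat \<times> nat \<times> nat) set" where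
  "supp c = {t. c t \<noteq> 0}"

definition rep where
  "rep c u \<longleftrightarrow> finite (supp c) \<and> u = (\<Sum>t\<in>supp c. sc (c t) * b t)"

lemma sum_super:
  assumes "finite T" "supp c \<subseteq> T"
  shows "(\<Sum>t\<in>supp c. sc (c t) * b t) = (\<Sum>t\<in>T. sc (c t) * b t)"
  by (rule sum.mono_neutral_left) (use assms in \<open>auto simp: supp_def sc0\<close>)

lemma indep_fin:
  assumes "finite T" "(\<Sum>t\<in>T. sc (c t) * b t) = 0" "t \<in> T"
  shows "c t = 0"
proof -
  obtain g where g0: "bij_betw g {0..<card T} T"
    using ex_bij_betw_nat_finite[OF assms(1)] by blast
  have g: "bij_betw g {..<card T} T" using g0 by (simp add: atLeast0LessThan)
  have "(\<Sum>i<card T. sc (c (g i)) * b (g i)) = (\<Sum>t\<in>T. sc (c t) * b t)"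
    using sum.reindex_bij_betw[OF g, of "\<lambda>t. sc (c t) * b t"] by simp
  then have z: "(\<Sum>i<card T. sc ((c \<circ> g) i) * b (g i)) = 0" using assms(2) by simp
  have "t \<in> g ` {..<card T}" using g assms(3) by (simp add: bij_betw_def)
  then obtain i where i: "i < card T" "g i = t" by auto
  have "(c \<circ> g) i = 0"
    by (rule indep[OF _ z i(1)]) (use g in \<open>simp add: bij_betw_def\<close>)
  then show ?thesis using i by simp
qed

lemma rep_unique:
  assumes "rep c u" "rep d u" shows "c = d"
proof
  fix t
  let ?T = "supp c \<union> supp d"
  have fin: "finite ?T" using assms by (auto simp: rep_def)
  have "u = (\<Sum>s\<in>?T. sc (c s) * b s)" using assms(1) sum_super[OF fin, of c] by (auto simp: rep_def)
  moreover have "u = (\<Sum>s\<in>?T. sc (d s) * b s)" using assms(2) sum_super[OF fin, of d] by (auto simp: rep_def)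
  ultimately have "(\<Sum>s\<in>?T. sc (c s - d s) * b s) = 0"
    by (simp add: sc_diff left_diff_distrib sum_subtractf)
  then have "t \<in> ?T \<Longrightarrow> c t - d t = 0" using indep_fin[OF fin, of "\<lambda>s. c s - d s"] by blast
  then show "c t = d t" by (cases "t \<in> ?T") (auto simp: supp_def)
qed

lemma rep_exists: "\<exists>c. rep c u"
proof -
  have "\<exists>(n::nat) a t. u = (\<Sum>l<n. sc (a l) * t l) \<and> (\<forall>l<n. t l \<in> range b)"
    using spanall[of u] unfolding lin_span_def by simp
  then obtain n :: nat and a t where u: "u = (\<Sum>l<n. sc (a l) * t l)" and t: "\<forall>l<n. t l \<in> range b"
    by blast
  define s where "s l = (SOME x. t l = b x)" for l
  have s: "t l = b (s l)" if "l < n" for l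
  proof -
    have "t l \<in> range b" using t that by blast
    then have "\<exists>x. t l = b x" by (simp only: image_iff Bex_def) blast
    then show ?thesis unfolding s_def by (rule someI_ex)
  qed
  define c where "c x = (\<Sum>l\<in>{l\<in>{..<n}. s l = x}. a l)" for x
  let ?T = "s ` {..<n}"
  have sub: "supp c \<subseteq> ?T"
  proof
    fix x assume "x \<in> supp c"
    then have "c x \<noteq> 0" by (simp add: supp_def)
    then have "{l\<in>{..<n}. s l = x} \<noteq> {}" unfolding c_def by (metis sum.empty)
    then show "x \<in> ?T" by auto
  qed
  have fin: "finite (supp c)" using sub finite_subset by blast
  have "(\<Sum>x\<in>?T. sc (c x) * b x) = (\<Sum>x\<in>?T. (\<Sum>l\<in>{l\<in>{..<n}. s l = x}. sc (a l) * b (s l)))"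
  proof (rule sum.cong[OF refl])
    fix x assume "x \<in> ?T"
    have "sc (c x) = (\<Sum>l\<in>{l\<in>{..<n}. s l = x}. sc (a l))"
      unfolding c_def by (induction rule: infinite_finite_induct) (auto simp: sc0 sc_add)
    then show "sc (c x) * b x = (\<Sum>l\<in>{l\<in>{..<n}. s l = x}. sc (a l) * b (s l))"
      by (simp add: sum_distrib_right)
  qed
  also have "\<dots> = (\<Sum>l<n. sc (a l) * b (s l))"
    by (rule sum.group) auto
  also have "\<dots> = u" using u s by simp
  finally have "rep c u" using sum_super[OF _ sub] fin by (simp add: rep_def)
  then show ?thesis by blast
qed

definition coef where "coef u = (THE c. rep c u)"

lemma coef_rep: "rep (coef u) u"
  unfolding coef_def using rep_exists rep_unique by (metis theI)

lemma coef_eqI: "rep c u \<Longrightarrow> coef u = c"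
  using coef_rep rep_unique by blast

lemma rep_sumI: "finite T \<Longrightarrow> supp c \<subseteq> T \<Longrightarrow> u = (\<Sum>t\<in>T. sc (c t) * b t) \<Longrightarrow> rep c u"
  unfolding rep_def using sum_super finite_subset by metis

lemma rep_add: assumes "rep c u" "rep d v" shows "rep (\<lambda>t. c t + d t) (u + v)"
proof -
  let ?T = "supp c \<union> supp d"
  have fin: "finite ?T" using assms by (auto simp: rep_def)
  have "u = (\<Sum>s\<in>?T. sc (c s) * b s)" using assms(1) sum_super[OF fin, of c] by (auto simp: rep_def)
  moreover have "v = (\<Sum>s\<in>?T. sc (d s) * b s)" using assms(2) sum_super[OF fin, of d] by (auto simp: rep_def)
  ultimately have eq: "u + v = (\<Sum>s\<in>?T. sc (c s + d s) * b s)"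
    by (simp add: sc_add distrib_right sum.distrib)
  show ?thesis by (rule rep_sumI[OF fin _ eq]) (auto simp: supp_def)
qed

lemma rep_smult: assumes "rep c u" shows "rep (\<lambda>t. a * c t) (sc a * u)"
proof -
  have fin: "finite (supp c)" using assms by (auto simp: rep_def)
  have eq: "sc a * u = (\<Sum>s\<in>supp c. sc (a * c s) * b s)"
    using assms by (simp add: rep_def sum_distrib_left sc_mult mult.assoc)
  show ?thesis by (rule rep_sumI[OF fin _ eq]) (auto simp: supp_def)
qed

lemma rep_b: "rep (\<lambda>s. if s = t then 1 else 0) (b t)"
  by (rule rep_sumI[of "{t}"]) (auto simp: supp_def sc1)

lemma rep_0: "rep (\<lambda>s. 0) 0"
  by (rule rep_sumI[of "{}"]) (auto simp: supp_def)

lemma rep_zero_iff: "rep (\<lambda>s. 0) u \<Longrightarrow> u = 0"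
  by (simp add: rep_def supp_def)

definition Lam where "Lam w u = (\<Sum>t\<in>supp (coef u). w t * coef u t)"

lemma Lam_rep: assumes "rep c u" "finite T" "supp c \<subseteq> T"
  shows "Lam w u = (\<Sum>t\<in>T. w t * c t)"
  unfolding Lam_def coef_eqI[OF assms(1)]
  by (rule sum.mono_neutral_left) (use assms in \<open>auto simp: supp_def\<close>)

lemma Lam_add: "Lam w (u + v) = Lam w u + Lam w v"
proof -
  let ?T = "supp (coef u) \<union> supp (coef v)"
  have fin: "finite ?T" using coef_rep[of u] coef_rep[of v] by (auto simp: rep_def)
  have r: "rep (\<lambda>t. coef u t + coef v t) (u+v)" by (rule rep_add[OF coef_rep coef_rep])
  have sub: "supp (\<lambda>t. coef u t + coef v t) \<subseteq> ?T" by (auto simp: supp_def)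
  have "Lam w (u + v) = (\<Sum>t\<in>?T. w t * (coef u t + coef v t))" by (rule Lam_rep[OF r fin sub])
  also have "\<dots> = (\<Sum>t\<in>?T. w t * coef u t) + (\<Sum>t\<in>?T. w t * coef v t)"
    by (simp add: distrib_left sum.distrib)
  also have "\<dots> = Lam w u + Lam w v"
    using Lam_rep[OF coef_rep fin, of u w] Lam_rep[OF coef_rep fin, of v w] by simp
  finally show ?thesis .
qed

lemma Lam_smult: "Lam w (sc a * u) = a * Lam w u"
proof -
  have fin: "finite (supp (coef u))" using coef_rep[of u] by (auto simp: rep_def)
  have sub: "supp (\<lambda>t. a * coef u t) \<subseteq> supp (coef u)" by (auto simp: supp_def)
  have "Lam w (sc a * u) = (\<Sum>t\<in>supp (coef u). w t * (a * coef u t))"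
    by (rule Lam_rep[OF rep_smult[OF coef_rep] fin sub])
  also have "\<dots> = a * (\<Sum>t\<in>supp (coef u). w t * coef u t)"
    by (simp add: sum_distrib_left mult_ac)
  also have "\<dots> = a * Lam w u" by (simp add: Lam_def)
  finally show ?thesis .
qed

lemma Lam_0: "Lam w 0 = 0"
  using Lam_smult[of w 0 0] sc0 by simp

lemma Lam_b: "Lam w (b t) = w t"
  using Lam_rep[OF rep_b, of "{t}"] by (auto simp: supp_def)

lemma Lam_sum: "finite A \<Longrightarrow> Lam w (\<Sum>i\<in>A. sc (c i) * y i) = (\<Sum>i\<in>A. c i * Lam w (y i))"
  by (induction rule: finite_induct) (simp_all add: Lam_0 Lam_add Lam_smult)

lemma Lam_sum': "finite A \<Longrightarrow> Lam w (\<Sum>i\<in>A. y i) = (\<Sum>i\<in>A. Lam w (y i))"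
  by (induction rule: finite_induct) (simp_all add: Lam_0 Lam_add)

end


inductive_set spanS :: "(complex \<Rightarrow> 'a::ring_1) \<Rightarrow> 'a \<Rightarrow> 'a \<Rightarrow> 'a set"
  for sc :: "complex \<Rightarrow> 'a" and F H :: 'a where
  S0: "0 \<in> spanS sc F H"
| Scons: "s \<in> spanS sc F H \<Longrightarrow> sc c * (F ^ i * H ^ j) + s \<in> spanS sc F H"

context rf begin

abbreviation "e \<equiv> \<eta> E"

lemma eta_sc: "\<eta> (sc c) = c" and eta_add: "y \<in> RE sc E \<Longrightarrow> z \<in> RE sc E \<Longrightarrow> \<eta> (y + z) = \<eta> y + \<eta> z"
  and eta_mult: "y \<in> RE sc E \<Longrightarrow> z \<in> RE sc E \<Longrightarrow> \<eta> (y * z) = \<eta> y * \<eta> z"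
  using eta unfolding is_eta_def by blast+

lemma pe_bound: "degree p \<le> N \<Longrightarrow> poly_eval sc p x = (\<Sum>i\<le>N. sc (coeff p i) * x ^ i)"
  unfolding poly_eval_def
  by (rule sum.mono_neutral_left) (auto simp: coeff_eq_0 sc0)

lemma RE_add: assumes "y \<in> RE sc E" "z \<in> RE sc E" shows "y + z \<in> RE sc E"
proof -
  obtain p q where y: "y = poly_eval sc p E" and z: "z = poly_eval sc q E" using assms by (auto simp: RE_def)
  let ?N = "max (degree p) (degree q)"
  have e1: "poly_eval sc p E = (\<Sum>i\<le>?N. sc (coeff p i) * E ^ i)" by (rule pe_bound) simp
  have e2: "poly_eval sc q E = (\<Sum>i\<le>?N. sc (coeff q i) * E ^ i)" by (rule pe_bound) simp
  have e3: "poly_eval sc (p + q) E = (\<Sum>i\<le>?N. sc (coeff (p + q) i) * E ^ i)"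
    by (rule pe_bound, rule degree_add_le) simp_all
  have "y + z = poly_eval sc (p + q) E"
    unfolding y z e1 e2 e3 by (simp add: sc_add distrib_right sum.distrib)
  then show ?thesis by (auto simp: RE_def)
qed

lemma pe_monom: "poly_eval sc (monom c i) E = sc c * E ^ i"
proof -
  have "poly_eval sc (monom c i) E = (\<Sum>l\<le>i. sc (coeff (monom c i) l) * E ^ l)"
    by (rule pe_bound) (simp add: degree_monom_le)
  also have "\<dots> = (\<Sum>l\<le>i. if l = i then sc c * E ^ i else 0)"
    by (rule sum.cong) (auto simp: coeff_monom sc0)
  finally show ?thesis by simp
qed

lemma RE_term: "sc c * E ^ i \<in> RE sc E"
  using pe_monom unfolding RE_def by (metis (mono_tags, lifting) mem_Collect_eq)

lemma RE_sc: "sc c \<in> RE sc E" using RE_term[of c 0] by simp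
lemma RE_pow: "E ^ i \<in> RE sc E" using RE_term[of 1 i] by (simp add: sc1)

lemma eta_pow: "\<eta> (E ^ i) = e ^ i"
proof (induction i)
  case 0 then show ?case using eta_sc[of 1] by (simp add: sc1)
next
  case (Suc i) then show ?case using eta_mult[of E "E^i"] RE_pow[of 1] RE_pow[of i] by simp
qed

lemma eta_term: "\<eta> (sc c * E ^ i) = c * e ^ i"
  using eta_mult[OF RE_sc RE_pow] eta_sc eta_pow by simp

lemma eta_sumE: "finite A \<Longrightarrow> (\<Sum>i\<in>A. sc (c i) * E ^ i) \<in> RE sc E \<and> \<eta> (\<Sum>i\<in>A. sc (c i) * E ^ i) = (\<Sum>i\<in>A. c i * e ^ i)"
proof (induction rule: finite_induct)
  case empty
  then show ?case using RE_sc[of 0] eta_sc[of 0] sc0 by simp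
next
  case (insert x F)
  then show ?case using RE_add[OF RE_term] eta_add[OF RE_term] eta_term by simp
qed

lemma eta_pe: "\<eta> (poly_eval sc p E) = poly p e"
  using eta_sumE[of "{..degree p}" "coeff p"] unfolding poly_eval_def poly_altdef by simp

end


context rf begin

abbreviation "I \<equiv> R_RetaE sc E \<eta>"
abbreviation "RF \<equiv> RFH sc F H"

lemma I_intro: "\<forall>i<n. y i \<in> RetaE sc E \<eta> \<Longrightarrow> (\<Sum>i<(n::nat). r i * y i) \<in> I"
  unfolding R_RetaE_def by blast

lemma I_0: "0 \<in> I"
  unfolding R_RetaE_def by (rule CollectI, rule exI[of _ 0]) auto

lemma I_cons: assumes "a \<in> I" "y \<in> RetaE sc E \<eta>" shows "r * y + a \<in> I"
proof -
  obtain n :: nat and rr yy where a: "a = (\<Sum>i<n. rr i * yy i)" and yy: "\<forall>i<n. yy i \<in> RetaE sc E \<eta>"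
    using assms(1) unfolding R_RetaE_def by blast
  have "r * y + a = (\<Sum>i<Suc n. (rr(n := r)) i * (yy(n := y)) i)"
    unfolding a by (simp add: add.commute)
  moreover have "\<forall>i<Suc n. (yy(n := y)) i \<in> RetaE sc E \<eta>" using yy assms(2) by auto
  ultimately show ?thesis using I_intro by metis
qed

lemma I_elim: assumes "a \<in> I"
  obtains n :: nat and rr yy where "a = (\<Sum>i<n. rr i * yy i)" "\<forall>i<n. yy i \<in> RetaE sc E \<eta>"
  using assms unfolding R_RetaE_def by blast

lemma I_lmult: assumes "a \<in> I" shows "z * a \<in> I"
proof -
  obtain n :: nat and rr yy where a: "a = (\<Sum>i<n. rr i * yy i)" and yy: "\<forall>i<n. yy i \<in> RetaE sc E \<eta>"
    using I_elim[OF assms] by blast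
  have "z * a = (\<Sum>i<n. (z * rr i) * yy i)" unfolding a by (simp add: sum_distrib_left mult.assoc)
  then show ?thesis using I_intro[OF yy, of "\<lambda>i. z * rr i"] by simp
qed

lemma I_add: assumes "a \<in> I" "c \<in> I" shows "a + c \<in> I"
proof -
  obtain n :: nat and rr yy where a: "a = (\<Sum>i<n. rr i * yy i)" and yy: "\<forall>i<n. yy i \<in> RetaE sc E \<eta>"
    using I_elim[OF assms(1)] by blast
  have "\<forall>m\<le>n. (\<Sum>i<m. rr i * yy i) + c \<in> I"
  proof (intro allI impI)
    fix m assume "m \<le> n" then show "(\<Sum>i<m. rr i * yy i) + c \<in> I"
    proof (induction m)
      case 0 then show ?case using assms(2) by simp
    next
      case (Suc m)
      then have "rr m * yy m + ((\<Sum>i<m. rr i * yy i) + c) \<in> I" using I_cons yy by simp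
      then show ?case by (simp add: add_ac)
    qed
  qed
  then show ?thesis using a by simp
qed

lemma I_diff: "a \<in> I \<Longrightarrow> c \<in> I \<Longrightarrow> a - c \<in> I"
  using I_add[of a "(-1) * c"] I_lmult[of c "-1"] by simp

lemma RF_sc: "sc c \<in> RF" unfolding RFH_def by (rule gen_scalar)
lemma RF_F: "F \<in> RF" unfolding RFH_def by (rule gen_base) simp
lemma RF_H: "H \<in> RF" unfolding RFH_def by (rule gen_base) simp
lemma RF_add: "x \<in> RF \<Longrightarrow> y \<in> RF \<Longrightarrow> x + y \<in> RF" unfolding RFH_def by (rule gen_add)
lemma RF_mult: "x \<in> RF \<Longrightarrow> y \<in> RF \<Longrightarrow> x * y \<in> RF" unfolding RFH_def by (rule gen_mult)
lemma RF_pow: "x \<in> RF \<Longrightarrow> x ^ n \<in> RF"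
  by (induction n) (use RF_sc[of 1] sc1 RF_mult in auto)
lemma RF_diff: "x \<in> RF \<Longrightarrow> y \<in> RF \<Longrightarrow> x - y \<in> RF"
  using RF_add[of x "sc (-1) * y"] RF_mult[OF RF_sc, of y "-1"] sc_neg sc1 by simp

abbreviation "S \<equiv> spanS sc F H"

lemma S_smult: "s \<in> S \<Longrightarrow> sc a * s \<in> S"
proof (induction rule: spanS.induct)
  case S0 then show ?case by (simp add: spanS.S0)
next
  case (Scons s c i j)
  have "sc a * (sc c * (F ^ i * H ^ j) + s) = sc (a * c) * (F ^ i * H ^ j) + sc a * s"
    by (simp add: distrib_left sc_mult mult.assoc)
  then show ?case using Scons spanS.Scons by metis
qed

lemma S_add: "s \<in> S \<Longrightarrow> t \<in> S \<Longrightarrow> s + t \<in> S"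
proof (induction rule: spanS.induct)
  case S0 then show ?case by simp
next
  case (Scons s c i j)
  then show ?case using spanS.Scons by (metis add.assoc)
qed

lemma HF: "H * F ^ i = F ^ i * H - of_nat i * F ^ i"
proof (induction i)
  case 0 then show ?case by simp
next
  case (Suc i)
  have hf: "H * F = F * H - F" using relHF by (simp add: algebra_simps)
  have "H * F ^ Suc i = (H * F ^ i) * F" by (simp only: power_Suc2 mult.assoc)
  also have "\<dots> = F ^ i * (H * F) - of_nat i * F ^ Suc i"
    unfolding Suc by (simp add: algebra_simps power_Suc2 power_commutes)
  also have "\<dots> = (F ^ i * F) * H - F ^ i * F - of_nat i * F ^ Suc i"
    unfolding hf by (simp only: right_diff_distrib mult.assoc)
  also have "\<dots> = F ^ Suc i * H - F ^ Suc i - of_nat i * F ^ Suc i"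
    by (simp only: power_Suc2)
  also have "\<dots> = F ^ Suc i * H - of_nat (Suc i) * F ^ Suc i"
    by (simp only: of_nat_Suc distrib_right mult_1_left diff_diff_eq)
  finally show ?case .
qed

lemma S_F: "s \<in> S \<Longrightarrow> F * s \<in> S"
proof (induction rule: spanS.induct)
  case S0 then show ?case by (simp add: spanS.S0)
next
  case (Scons s c i j)
  have "F * (sc c * (F ^ i * H ^ j)) = (F * sc c) * (F ^ i * H ^ j)" by (simp only: mult.assoc)
  also have "\<dots> = sc c * (F ^ Suc i * H ^ j)" by (simp only: sc_comm[of c F, symmetric] mult.assoc power_Suc)
  finally have "F * (sc c * (F ^ i * H ^ j) + s) = sc c * (F ^ Suc i * H ^ j) + F * s"
    by (simp only: distrib_left)
  then show ?case using Scons spanS.Scons by metis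
qed

lemma S_H: "s \<in> S \<Longrightarrow> H * s \<in> S"
proof (induction rule: spanS.induct)
  case S0 then show ?case by (simp add: spanS.S0)
next
  case (Scons s c i j)
  have "H * (sc c * (F ^ i * H ^ j)) = sc c * ((H * F ^ i) * H ^ j)"
    by (metis mult.assoc sc_comm)
  also have "\<dots> = sc c * (F ^ i * H ^ Suc j) + sc (- (c * of_nat i)) * (F ^ i * H ^ j)"
    unfolding HF by (simp add: algebra_simps sc_neg sc_mult sc_of_nat power_Suc)
  finally have "H * (sc c * (F ^ i * H ^ j) + s) = sc c * (F ^ i * H ^ Suc j) + (sc (- (c * of_nat i)) * (F ^ i * H ^ j) + H * s)"
    by (simp add: distrib_left add.assoc)
  then show ?case using Scons spanS.Scons by metis
qed

lemma RF_S: assumes "x \<in> RF" shows "x \<in> S"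
proof -
  have "x \<in> gen_subalg sc {F, H}" using assms by (simp add: RFH_def)
  then have "\<forall>s\<in>S. x * s \<in> S"
  proof (induction rule: gen_subalg.induct)
    case (gen_scalar c) then show ?case using S_smult by blast
  next
    case (gen_base x) then show ?case using S_F S_H by blast
  next
    case (gen_add x y) then show ?case using S_add by (simp add: distrib_right)
  next
    case (gen_mult x y) then show ?case by (simp add: mult.assoc)
  qed
  moreover have "1 \<in> S" using spanS.Scons[OF spanS.S0, where sc=sc and F=F and H=H and c=1 and i=0 and j=0] by (simp add: sc1)
  ultimately show ?thesis by force
qed

end


context rf begin

lemma S_coef: "s \<in> S \<Longrightarrow> k \<noteq> 0 \<Longrightarrow> coef s (i, j, k) = 0"
proof (induction rule: spanS.induct)
  case S0 then show ?case using coef_eqI[OF rep_0] by simp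
next
  case (Scons s c i' j')
  have bt: "F ^ i' * H ^ j' = b (i', j', 0)" by (simp add: monoFHE_def)
  have "coef (sc c * (F ^ i' * H ^ j') + s) = (\<lambda>t. c * (if t = (i', j', 0) then 1 else 0) + coef s t)"
    unfolding bt by (rule coef_eqI[OF rep_add[OF rep_smult[OF rep_b] coef_rep]])
  then show ?case using Scons by simp
qed

definition wt :: "nat \<Rightarrow> nat \<Rightarrow> nat \<times> nat \<times> nat \<Rightarrow> complex" where
  "wt i j t = (case t of (i', j', k) \<Rightarrow> if i' = i \<and> j' = j then e ^ k else 0)"

definition shift :: "nat \<times> nat \<times> nat \<Rightarrow> nat \<times> nat \<times> nat" where
  "shift t = (case t of (i, j, k) \<Rightarrow> (i, j, Suc k))"

lemma b_E: "b t * E = b (shift t)"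
  by (cases t) (simp add: monoFHE_def shift_def power_Suc2 mult.assoc power_commutes)

lemma wt_shift: "wt i j (shift t) = e * wt i j t"
  by (cases t) (simp add: wt_def shift_def)

lemma Lam_E: "Lam (wt i j) (u * E) = e * Lam (wt i j) u"
proof -
  let ?A = "supp (coef u)"
  have fin: "finite ?A" using coef_rep[of u] by (simp add: rep_def)
  have u: "u = (\<Sum>t\<in>?A. sc (coef u t) * b t)" using coef_rep[of u] by (simp add: rep_def)
  have "u * E = (\<Sum>t\<in>?A. sc (coef u t) * b (shift t))"
    by (subst u) (simp add: sum_distrib_right mult.assoc b_E)
  then have "Lam (wt i j) (u * E) = (\<Sum>t\<in>?A. coef u t * Lam (wt i j) (b (shift t)))"
    using Lam_sum[OF fin] by simp
  also have "\<dots> = e * (\<Sum>t\<in>?A. wt i j t * coef u t)"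
    by (simp add: Lam_b wt_shift sum_distrib_left mult_ac)
  also have "\<dots> = e * Lam (wt i j) u" by (simp add: Lam_def)
  finally show ?thesis .
qed

lemma Lam_Epow: "Lam (wt i j) (u * E ^ m) = e ^ m * Lam (wt i j) u"
proof (induction m)
  case 0 then show ?case by simp
next
  case (Suc m)
  have "u * E ^ Suc m = (u * E ^ m) * E" by (simp only: power_Suc2 mult.assoc)
  then show ?case using Lam_E[of i j "u * E ^ m"] Suc by simp
qed

lemma Lam_RE: assumes "y \<in> RE sc E" shows "Lam (wt i j) (u * y) = \<eta> y * Lam (wt i j) u"
proof -
  obtain p where y: "y = poly_eval sc p E" using assms by (auto simp: RE_def)
  have "u * y = (\<Sum>l\<le>degree p. sc (coeff p l) * (u * E ^ l))"
    unfolding y poly_eval_def sum_distrib_left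
  proof (rule sum.cong[OF refl])
    fix l
    have "u * (sc (coeff p l) * E ^ l) = (u * sc (coeff p l)) * E ^ l" by (simp only: mult.assoc)
    also have "\<dots> = sc (coeff p l) * (u * E ^ l)" by (simp only: sc_comm mult.assoc)
    finally show "u * (sc (coeff p l) * E ^ l) = sc (coeff p l) * (u * E ^ l)" .
  qed
  then have "Lam (wt i j) (u * y) = (\<Sum>l\<le>degree p. coeff p l * (e ^ l * Lam (wt i j) u))"
    using Lam_sum[of "{..degree p}"] Lam_Epow by simp
  also have "\<dots> = poly p e * Lam (wt i j) u"
    by (simp add: poly_altdef sum_distrib_left mult_ac)
  also have "\<dots> = \<eta> y * Lam (wt i j) u" using eta_pe y by simp
  finally show ?thesis .
qed

lemma Lam_I: assumes "a \<in> I" shows "Lam (wt i j) a = 0"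
proof -
  obtain n :: nat and rr yy where a: "a = (\<Sum>l<n. rr l * yy l)" and yy: "\<forall>l<n. yy l \<in> RetaE sc E \<eta>"
    using I_elim[OF assms] by blast
  have "Lam (wt i j) a = (\<Sum>l<n. Lam (wt i j) (rr l * yy l))" unfolding a by (rule Lam_sum') simp
  also have "\<dots> = 0"
  proof (rule sum.neutral, rule ballI)
    fix l assume "l \<in> {..<n}"
    then have "yy l \<in> RE sc E" "\<eta> (yy l) = 0" using yy by (auto simp: RetaE_def)
    then show "Lam (wt i j) (rr l * yy l) = 0" using Lam_RE by simp
  qed
  finally show ?thesis .
qed

lemma Lam_S: assumes "s \<in> S" shows "Lam (wt i j) s = coef s (i, j, 0)"
proof -
  have "Lam (wt i j) s = (\<Sum>t\<in>supp (coef s). if t = (i, j, 0) then coef s t else 0)"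
    unfolding Lam_def
  proof (rule sum.cong[OF refl])
    fix t show "wt i j t * coef s t = (if t = (i, j, 0) then coef s t else 0)"
    proof (cases t)
      case (fields i' j' k)
      show ?thesis
      proof (cases "k = 0")
        case True then show ?thesis using fields by (simp add: wt_def)
      next
        case False then show ?thesis using fields S_coef[OF assms False] by simp
      qed
    qed
  qed
  also have "\<dots> = coef s (i, j, 0)"
    using coef_rep[of s] by (simp add: rep_def supp_def)
  finally show ?thesis .
qed

lemma unique0: assumes "p \<in> RF" "p \<in> I" shows "p = 0"
proof -
  have pS: "p \<in> S" using RF_S assms(1) by blast
  have "coef p = (\<lambda>t. 0)"
  proof
    fix t show "coef p t = 0"
    proof (cases t)
      case (fields i j k)
      show ?thesis
      proof (cases "k = 0")
        case True then show ?thesis using fields Lam_S[OF pS, of i j] Lam_I[OF assms(2), of i j] by simp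
      next
        case False then show ?thesis using fields S_coef[OF pS False] by simp
      qed
    qed
  qed
  then show ?thesis using coef_rep[of p] rep_zero_iff by simp
qed

lemma decomp_b: "\<exists>p\<in>RF. b t - p \<in> I"
proof (cases t)
  case (fields i j k)
  let ?r = "F ^ i * H ^ j"
  let ?y = "E ^ k - sc (e ^ k)"
  have yRE: "?y \<in> RE sc E" using RE_add[OF RE_pow RE_sc, of k "- (e ^ k)"] by (simp add: sc_neg)
  have "\<eta> ?y = \<eta> (E ^ k) + \<eta> (sc (- (e ^ k)))"
    using eta_add[OF RE_pow RE_sc, of k "- (e ^ k)"] by (simp add: sc_neg)
  then have "\<eta> ?y = 0" by (simp add: eta_pow eta_sc)
  then have y: "?y \<in> RetaE sc E \<eta>" using yRE by (simp add: RetaE_def)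
  have "?r * ?y + 0 \<in> I" by (rule I_cons[OF I_0 y])
  moreover have "?r * ?y + 0 = b t - sc (e ^ k) * ?r"
    using fields by (simp add: monoFHE_def right_diff_distrib sc_comm)
  moreover have "sc (e ^ k) * ?r \<in> RF" by (intro RF_mult RF_sc RF_pow RF_F RF_H)
  ultimately show ?thesis by metis
qed

lemma decomp_sum: "finite A \<Longrightarrow> \<exists>p\<in>RF. (\<Sum>t\<in>A. sc (c t) * b t) - p \<in> I"
proof (induction rule: finite_induct)
  case empty
  have "(\<Sum>t\<in>{}. sc (c t) * b t) - 0 \<in> I" using I_0 by simp
  then show ?case using RF_sc[of 0] sc0 by (metis empty_iff)
next
  case (insert x A)
  obtain p where p: "p \<in> RF" "(\<Sum>t\<in>A. sc (c t) * b t) - p \<in> I" using insert by blast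
  obtain q where q: "q \<in> RF" "b x - q \<in> I" using decomp_b by blast
  have "sc (c x) * (b x - q) + ((\<Sum>t\<in>A. sc (c t) * b t) - p) \<in> I"
    by (rule I_add[OF I_lmult[OF q(2)] p(2)])
  moreover have "sc (c x) * (b x - q) + ((\<Sum>t\<in>A. sc (c t) * b t) - p)
      = (\<Sum>t\<in>insert x A. sc (c t) * b t) - (sc (c x) * q + p)"
    using insert by (simp add: algebra_simps)
  moreover have "sc (c x) * q + p \<in> RF" by (intro RF_add RF_mult RF_sc p q)
  ultimately show ?case by metis
qed

lemma decomp: "\<exists>p\<in>RF. a - p \<in> I"
  using decomp_sum[of "supp (coef a)" "coef a"] coef_rep[of a] by (simp add: rep_def)

lemma decomp_unique: "\<exists>!p. p \<in> RF \<and> a - p \<in> I"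
proof -
  obtain p where p: "p \<in> RF" "a - p \<in> I" using decomp by blast
  have "q = p" if q: "q \<in> RF" "a - q \<in> I" for q
  proof -
    have "q - p \<in> RF" by (rule RF_diff[OF q(1) p(1)])
    moreover have "(a - p) - (a - q) \<in> I" by (rule I_diff[OF p(2) q(2)])
    then have "q - p \<in> I" by simp
    ultimately have "q - p = 0" by (rule unique0)
    then show ?thesis by simp
  qed
  then show ?thesis using p by blast
qed

lemma eta_part_prop: "eta_part sc E F H \<eta> a \<in> RF \<and> a - eta_part sc E F H \<eta> a \<in> I"
  unfolding eta_part_def by (rule theI'[OF decomp_unique])

lemma eta_partI: "p \<in> RF \<Longrightarrow> a - p \<in> I \<Longrightarrow> eta_part sc E F H \<eta> a = p"
  unfolding eta_part_def by (rule the1_equality[OF decomp_unique]) simp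

end

theorem mainTheorem19:
  fixes sc :: "complex \<Rightarrow> 'a::ring_1" and f :: "complex poly" and E F H :: 'a
    and \<eta> :: "'a \<Rightarrow> complex" and x u v :: 'a
  assumes "is_Rf sc f E F H"
    and "is_eta sc E \<eta>" and "\<eta> E \<noteq> 0"
    and "x \<in> RE sc E" and "u \<in> RFH sc F H" and "v \<in> W_FH sc E F H \<eta>"
  shows "eta_act sc E F H \<eta> x (u * v) = eta_act sc E F H \<eta> x u * v"
proof -
  interpret rf sc f E F H \<eta> using assms(1,2) by (rule rf.intro)
  obtain z where z: "z \<in> center" "v = eta_part sc E F H \<eta> z"
    using assms(6) by (auto simp: W_FH_def)
  have vRF: "v \<in> RFH sc F H" and zv: "z - v \<in> R_RetaE sc E \<eta>" using eta_part_prop[of z] z by auto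
  define a where "a = x * u"
  define a' where "a' = eta_part sc E F H \<eta> a"
  have a'RF: "a' \<in> RFH sc F H" and aa': "a - a' \<in> R_RetaE sc E \<eta>"
    using eta_part_prop[of a] by (auto simp: a'_def)
  have zc: "z * (a - a') = (a - a') * z" using z(1) by (simp add: center_def)
  have "z * (a - a') - (a - a') * (z - v) = (a - a') * z - (a - a') * (z - v)" by (simp only: zc)
  also have "\<dots> = a * v - a' * v" by (simp add: algebra_simps)
  finally have "a * v - a' * v = z * (a - a') - (a - a') * (z - v)" by simp
  moreover have "z * (a - a') - (a - a') * (z - v) \<in> R_RetaE sc E \<eta>"
    by (rule I_diff[OF I_lmult[OF aa'] I_lmult[OF zv]])
  ultimately have "a * v - a' * v \<in> R_RetaE sc E \<eta>" by simp
  then have "eta_part sc E F H \<eta> (a * v) = a' * v"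
    by (rule eta_partI[OF RF_mult[OF a'RF vRF]])
  then have "eta_part sc E F H \<eta> (x * (u * v)) = a' * v" by (simp add: a_def mult.assoc)
  then show ?thesis
    unfolding eta_act_def a'_def a_def by (simp add: left_diff_distrib mult.assoc)
qed


end
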